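(* Let $V$ be a finite set, let $d$ be a monotone and consistent symmetric set function on $V$, and let $\tau\in\mathbb{R}$. Let $\mathcal{V}$ be a partition of $V$ such that $\lambda_{(V,d)}(u,v)\geq\tau$ for every pair $u,v\in V$ with $[u]=[v]$. Then for every pair $s,t\in V$ with $[s]\neq[t]$, $$\min\{\tau,\lambda_{(\mathcal{V},d_\mathcal{V})}([s],[t])\}=\min\{\tau,\lambda_{(V,d)}(s,t)\},$$ and moreover $$\min\{\tau,\lambda_{(\mathcal{V},d_\mathcal{V})}\}=\min\{\tau,\lambda_{(V,d)}\}.$$
   Context: A symmetric set function $d$ on a finite set $V$ assigns a real number $d(S,T)$ to every ordered pair $(S,T)$ of disjoint subsets of $V$, such that $d(S,T)=d(T,S)$. It is monotone if $d(S,T')\leq d(S,T)$ whenever $S,T$ are disjoint and $T'\subseteq T$; consistent if for all pairwise disjoint $R,S,T$, $d(S,R)\geq d(T,R)$ implies $d(S,R\cup T)\geq d(S\cup R,T)$. For $s,t\in V$, $\lambda_{(V,d)}(s,t)=\min\{d(S,V\setminus S)\mid s\in S\subseteq V,\ t\notin S\}$ and $\lambda_{(V,d)}=\min\{\lambda_{(V,d)}(s,t)\mid s,t\in V\}$, with the minimum of an empty set being $+\infty$. For a partition $\mathcal{V}$ of $V$ and $v\in V$, $[v]$ denotes the class of $\mathcal{V}$ containing $v$; for a set $\mathcal{S}$ of classes, $\cup\mathcal{S}$ is the union of its classes. The induced function on $\mathcal{V}$ is $d_\mathcal{V}(\mathcal{S},\mathcal{T})=d(\cup\mathcal{S},\cup\mathcal{T})$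 for disjoint sets $\mathcal{S},\mathcal{T}$ of classes; it is a symmetric set function on the finite set $\mathcal{V}$, and $\lambda_{(\mathcal{V},d_\mathcal{V})}(\cdot,\cdot)$, $\lambda_{(\mathcal{V},d_\mathcal{V})}$ are defined analogously. *)

theory Defs
  imports "HOL-Analysis.Analysis" "HOL-Library.Disjoint_Sets"
begin

text \<open>A set function on ground set V: d S T given for disjoint S, T \<subseteq> V
 (values elsewhere are irrelevant).\<close>

definition symmetric_setfun :: "'a set \<Rightarrow> ('a set \<Rightarrow> 'a set \<Rightarrow> real) \<Rightarrow> bool" where
  "symmetric_setfun V d \<longleftrightarrow>
     (\<forall>S T. S \<subseteq> V \<and> T \<subseteq> V \<and> S \<inter> T = {} \<longrightarrow> d S T = d T S)"

definition monotone_setfun :: "'a set \<Rightarrow> ('a set \<Rightarrow> 'a set \<Rightarrow> real) \<Rightarrow> bool" where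
  "monotone_setfun V d \<longleftrightarrow>
     (\<forall>S T T'. S \<subseteq> V \<and> T \<subseteq> V \<and> S \<inter> T = {} \<and> T' \<subseteq> T \<longrightarrow> d S T' \<le> d S T)"

definition consistent_setfun :: "'a set \<Rightarrow> ('a set \<Rightarrow> 'a set \<Rightarrow> real) \<Rightarrow> bool" where
  "consistent_setfun V d \<longleftrightarrow>
     (\<forall>R S T. R \<subseteq> V \<and> S \<subseteq> V \<and> T \<subseteq> V \<and> R \<inter> S = {} \<and> R \<inter> T = {} \<and> S \<inter> T = {}
        \<longrightarrow> d S R \<ge> d T R \<longrightarrow> d S (R \<union> T) \<ge> d (S \<union> R) T)"

text \<open>lambda_(V,d)(s,t); the infimum of the empty set in ereal is +\<infinity>.\<close>
definition lam :: "'a set \<Rightarrow> ('a set \<Rightarrow> 'a set \<Rightarrow> real) \<Rightarrow> 'a \<Rightarrow> 'a \<Rightarrow> ereal" where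
  "lam V d s t = Inf {ereal (d S (V - S)) | S. s \<in> S \<and> S \<subseteq> V \<and> t \<notin> S}"

definition lam_all :: "'a set \<Rightarrow> ('a set \<Rightarrow> 'a set \<Rightarrow> real) \<Rightarrow> ereal" where
  "lam_all V d = Inf {lam V d s t | s t. s \<in> V \<and> t \<in> V}"

definition induced :: "('a set \<Rightarrow> 'a set \<Rightarrow> real) \<Rightarrow> 'a set set \<Rightarrow> 'a set set \<Rightarrow> real" where
  "induced d \<SS> \<TT> = d (\<Union>\<SS>) (\<Union>\<TT>)"

definition cls :: "'a set set \<Rightarrow> 'a \<Rightarrow> 'a set" where
  "cls P v = (THE X. X \<in> P \<and> v \<in> X)"

end

theory Submission
  imports Defs
begin

lemma disj_mem:
  assumes "disjoint P" "X \<in> P" "Y \<in> P" "x \<in> X" "x \<in> Y"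
  shows "X = Y"
proof (rule ccontr)
  assume "X \<noteq> Y"
  then have "X \<inter> Y = {}" by (rule disjointD[OF assms(1) assms(2) assms(3)])
  then show False using assms(4,5) by blast
qed

lemma cls_eq:
  assumes "partition_on V P" "X \<in> P" "v \<in> X"
  shows "cls P v = X"
  unfolding cls_def
proof (rule the_equality)
  show "X \<in> P \<and> v \<in> X" using assms by auto
next
  fix Y assume "Y \<in> P \<and> v \<in> Y"
  then show "Y = X" using disj_mem[OF partition_onD2[OF assms(1)]] assms by blast
qed

lemma cls_mem:
  assumes "partition_on V P" "v \<in> V"
  shows "cls P v \<in> P" "v \<in> cls P v"
proof -
  obtain X where "X \<in> P" "v \<in> X" using assms partition_onD1[OF assms(1)] by auto
  then show "cls P v \<in> P" "v \<in> cls P v" using cls_eq[OF assms(1)] by auto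
qed

lemma union_compl:
  assumes "partition_on V P" "\<SS> \<subseteq> P"
  shows "\<Union>(P - \<SS>) = V - \<Union>\<SS>"
proof
  have U: "\<Union>P = V" using partition_onD1[OF assms(1)] by simp
  have D: "disjoint P" using partition_onD2[OF assms(1)] .
  show "\<Union>(P - \<SS>) \<subseteq> V - \<Union>\<SS>"
  proof
    fix x assume "x \<in> \<Union>(P - \<SS>)"
    then obtain Y where Y: "Y \<in> P" "Y \<notin> \<SS>" "x \<in> Y" by blast
    have "x \<notin> \<Union>\<SS>"
    proof
      assume "x \<in> \<Union>\<SS>"
      then obtain X where "X \<in> \<SS>" "x \<in> X" by blast
      then have "X = Y" using disj_mem[OF D] Y assms(2) by blast
      then show False using Y \<open>X \<in> \<SS>\<close> by simp
    qed
    then show "x \<in> V - \<Union>\<SS>" using Y U by blast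
  qed
  show "V - \<Union>\<SS> \<subseteq> \<Union>(P - \<SS>)" using U by blast
qed

lemma min_eq:
  fixes t a b :: "'b::linorder"
  assumes "min t a \<le> b" "min t b \<le> a"
  shows "min t a = min t b"
  using assms unfolding min_def by (auto split: if_splits)

lemma pair_case:
  assumes part: "partition_on V P"
    and hyp: "\<forall>u\<in>V. \<forall>v\<in>V. cls P u = cls P v \<longrightarrow> lam V d u v \<ge> ereal \<tau>"
    and st: "s \<in> V" "t \<in> V" "cls P s \<noteq> cls P t"
  shows "min (ereal \<tau>) (lam P (induced d) (cls P s) (cls P t)) = min (ereal \<tau>) (lam V d s t)"
proof -
  define A where "A = {ereal (d S (V - S)) | S. s \<in> S \<and> S \<subseteq> V \<and> t \<notin> S}"
  define B where "B = {ereal (induced d \<SS> (P - \<SS>)) | \<SS>. cls P s \<in> \<SS> \<and> \<SS> \<subseteq> P \<and> cls P t \<notin> \<SS>}"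
  have lA: "lam V d s t = Inf A" unfolding A_def lam_def by simp
  have lB: "lam P (induced d) (cls P s) (cls P t) = Inf B" unfolding B_def lam_def by simp
  have BA: "B \<subseteq> A"
  proof
    fix b assume "b \<in> B"
    then obtain \<SS> where S: "b = ereal (induced d \<SS> (P - \<SS>))" "cls P s \<in> \<SS>" "\<SS> \<subseteq> P" "cls P t \<notin> \<SS>"
      unfolding B_def by auto
    have "\<Union>\<SS> \<subseteq> V" using S(3) partition_onD1[OF part] by auto
    moreover have "s \<in> \<Union>\<SS>" using S(2) cls_mem[OF part st(1)] by auto
    moreover have "t \<notin> \<Union>\<SS>"
    proof
      assume "t \<in> \<Union>\<SS>"
      then obtain X where "X \<in> \<SS>" "t \<in> X" by auto
      then have "cls P t = X" using cls_eq[OF part] S(3) by auto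
      then show False using S(4) \<open>X \<in> \<SS>\<close> by simp
    qed
    moreover have "b = ereal (d (\<Union>\<SS>) (V - \<Union>\<SS>))"
      using S(1) union_compl[OF part S(3)] unfolding induced_def by simp
    ultimately show "b \<in> A" unfolding A_def by blast
  qed
  have AB: "a \<in> B" if "a \<in> A" "a < ereal \<tau>" for a
  proof -
    obtain S where S: "a = ereal (d S (V - S))" "s \<in> S" "S \<subseteq> V" "t \<notin> S"
      using \<open>a \<in> A\<close> unfolding A_def by blast
    have nc: "v \<in> S" if "u \<in> S" "v \<in> V" "cls P u = cls P v" for u v
    proof (rule ccontr)
      assume "v \<notin> S"
      have "lam V d u v \<le> a" unfolding lam_def S(1)
        by (rule Inf_lower) (use \<open>v \<notin> S\<close> that S in blast)
      moreover have "lam V d u v \<ge> ereal \<tau>" using hyp that S(3) by blast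
      ultimately show False using \<open>a < ereal \<tau>\<close> by simp
    qed
    define \<SS> where "\<SS> = {X \<in> P. X \<subseteq> S}"
    have US: "\<Union>\<SS> = S"
    proof
      show "\<Union>\<SS> \<subseteq> S" unfolding \<SS>_def by auto
      show "S \<subseteq> \<Union>\<SS>"
      proof
        fix u assume "u \<in> S"
        then have uV: "u \<in> V" using S(3) by auto
        have "cls P u \<subseteq> S"
        proof
          fix v assume v: "v \<in> cls P u"
          have "v \<in> V" using v cls_mem(1)[OF part uV] partition_onD1[OF part] by auto
          moreover have "cls P v = cls P u" using cls_eq[OF part cls_mem(1)[OF part uV] v] .
          ultimately show "v \<in> S" using nc \<open>u \<in> S\<close> by metis
        qed
        then show "u \<in> \<Union>\<SS>" unfolding \<SS>_def using cls_mem[OF part uV] by auto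
      qed
    qed
    have "\<SS> \<subseteq> P" unfolding \<SS>_def by auto
    have "cls P s \<in> \<SS>"
    proof -
      have "cls P s \<subseteq> S"
      proof
        fix v assume v: "v \<in> cls P s"
        have "v \<in> V" using v cls_mem(1)[OF part st(1)] partition_onD1[OF part] by auto
        moreover have "cls P v = cls P s" using cls_eq[OF part cls_mem(1)[OF part st(1)] v] .
        ultimately show "v \<in> S" using nc S(2) by metis
      qed
      then show ?thesis unfolding \<SS>_def using cls_mem[OF part st(1)] by auto
    qed
    moreover have "cls P t \<notin> \<SS>" unfolding \<SS>_def using cls_mem[OF part st(2)] S(4) by auto
    moreover have "a = ereal (induced d \<SS> (P - \<SS>))"
      using S(1) union_compl[OF part \<open>\<SS> \<subseteq> P\<close>] US unfolding induced_def by simp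
    ultimately show ?thesis unfolding B_def using \<open>\<SS> \<subseteq> P\<close> by blast
  qed
  have 1: "Inf A \<le> Inf B" using BA by (rule Inf_superset_mono)
  have 2: "min (ereal \<tau>) (Inf B) \<le> Inf A"
  proof (rule Inf_greatest)
    fix a assume "a \<in> A"
    show "min (ereal \<tau>) (Inf B) \<le> a"
    proof (cases "a < ereal \<tau>")
      case True
      then have "Inf B \<le> a" using AB \<open>a \<in> A\<close> by (simp add: Inf_lower)
      then show ?thesis by (rule min.coboundedI2)
    next
      case False
      then show ?thesis by (simp add: min.coboundedI1)
    qed
  qed
  have 3: "min (ereal \<tau>) (Inf A) \<le> Inf B" using 1 by (meson min.coboundedI2)
  show ?thesis unfolding lA lB using min_eq[OF 2 3] by simp
qed

theorem lemma6:
  fixes V :: "'a set" and d :: "'a set \<Rightarrow> 'a set \<Rightarrow> real" and \<tau> :: real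
    and P :: "'a set set"
  assumes "finite V"
    and "symmetric_setfun V d" and "monotone_setfun V d" and "consistent_setfun V d"
    and "partition_on V P"
    and "\<forall>u\<in>V. \<forall>v\<in>V. cls P u = cls P v \<longrightarrow> lam V d u v \<ge> ereal \<tau>"
  shows "(\<forall>s\<in>V. \<forall>t\<in>V. cls P s \<noteq> cls P t \<longrightarrow>
            min (ereal \<tau>) (lam P (induced d) (cls P s) (cls P t)) = min (ereal \<tau>) (lam V d s t))
       \<and> min (ereal \<tau>) (lam_all P (induced d)) = min (ereal \<tau>) (lam_all V d)"
proof -
  note part = assms(5) and hyp = assms(6)
  have pc: "\<forall>s\<in>V. \<forall>t\<in>V. cls P s \<noteq> cls P t \<longrightarrow>
            min (ereal \<tau>) (lam P (induced d) (cls P s) (cls P t)) = min (ereal \<tau>) (lam V d s t)"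
    using pair_case[OF part hyp] by blast
  have a: "min (ereal \<tau>) (lam_all P (induced d)) \<le> lam_all V d"
    unfolding lam_all_def
  proof (rule Inf_greatest)
    fix x assume "x \<in> {lam V d s t | s t. s \<in> V \<and> t \<in> V}"
    then obtain s t where x: "x = lam V d s t" "s \<in> V" "t \<in> V" by auto
    show "min (ereal \<tau>) (Inf {lam P (induced d) s t | s t. s \<in> P \<and> t \<in> P}) \<le> x"
    proof (cases "cls P s = cls P t \<or> x \<ge> ereal \<tau>")
      case True
      then have "x \<ge> ereal \<tau>" using hyp x by blast
      then show ?thesis by (simp add: min.coboundedI1)
    next
      case False
      then have "min (ereal \<tau>) (lam P (induced d) (cls P s) (cls P t)) = min (ereal \<tau>) x"
        using pc x by blast
      also have "\<dots> = x" using False by (auto simp: min_def)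
      finally have "lam P (induced d) (cls P s) (cls P t) \<le> x" using False
        by (metis min.cobounded2 min_def)
      moreover have "Inf {lam P (induced d) s t | s t. s \<in> P \<and> t \<in> P} \<le> lam P (induced d) (cls P s) (cls P t)"
        by (rule Inf_lower) (use cls_mem[OF part] x in blast)
      ultimately show ?thesis by (meson min.coboundedI2 order_trans)
    qed
  qed
  have b: "min (ereal \<tau>) (lam_all V d) \<le> lam_all P (induced d)"
    unfolding lam_all_def
  proof (rule Inf_greatest)
    fix x assume "x \<in> {lam P (induced d) s t | s t. s \<in> P \<and> t \<in> P}"
    then obtain X Y where x: "x = lam P (induced d) X Y" "X \<in> P" "Y \<in> P" by auto
    obtain s where s: "s \<in> X" using x(2) partition_onD3[OF part] by (metis ex_in_conv)
    obtain t where t: "t \<in> Y" using x(3) partition_onD3[OF part] by (metis ex_in_conv)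
    have sV: "s \<in> V" and tV: "t \<in> V" using s t x partition_onD1[OF part] by auto
    have cs: "cls P s = X" and ct: "cls P t = Y" using cls_eq[OF part] s t x by auto
    show "min (ereal \<tau>) (Inf {lam V d s t | s t. s \<in> V \<and> t \<in> V}) \<le> x"
    proof (cases "X = Y")
      case True
      then have "x = top" unfolding x lam_def by auto
      then show ?thesis by simp
    next
      case False
      have "min (ereal \<tau>) (Inf {lam V d s t | s t. s \<in> V \<and> t \<in> V}) \<le> min (ereal \<tau>) (lam V d s t)"
        by (rule min.mono, simp, rule Inf_lower) (use sV tV in blast)
      also have "\<dots> = min (ereal \<tau>) x" using pc sV tV cs ct False x by metis
      also have "\<dots> \<le> x" by simp
      finally show ?thesis .
    qed
  qed
  have "min (ereal \<tau>) (lam_all P (induced d)) = min (ereal \<tau>) (lam_all V d)"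
    using min_eq[OF a b] .
  with pc show ?thesis by blast
qed

end
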